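(* Let $\mathcal{G}$ be a simple temporal clique and let $u,v$ be distinct vertices. If $\{u,v\}=e^-(v)$, then for every vertex $x\notin\{u,v\}$ there is a journey from $u$ to $x$ whose first edge is $\{u,v\}$ (i.e. $u$ can reach all vertices through $v$). Symmetrically, if $u,w$ are distinct vertices with $\{u,w\}=e^+(w)$, then for every vertex $x\notin\{u,w\}$ there is a journey from $x$ to $u$ whose last edge is $\{w,u\}$ (i.e. all vertices can reach $u$ through $w$).
   Context: A simple temporal clique is a pair $\mathcal{G}=(G,\lambda)$ where $G=(V,E)$ is the complete graph on a finite vertex set $V$ and $\lambda:E\to\mathbb{N}$ assigns to each edge a single integer label such that any two distinct edges sharing an endpoint have different labels. A journey from $x$ to $y$ is a sequence of vertices $x=u_0,u_1,\dots,u_k=y$ ($k\ge1$) with $\lambda(\{u_{i-1},u_i\})<\lambda(\{u_i,u_{i+1}\})$ for all $1\le i<k$; its first edge is $\{u_0,u_1\}$ and its last edge is $\{u_{k-1},u_k\}$. For a vertex $v$, $e^-(v)$ (resp. $e^+(v)$) denotes the edge incident to $v$ with the smallest (resp. largest) label. *)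

theory Defs
  imports Main
begin

definition simple_temporal_clique :: "'v set \<Rightarrow> ('v set \<Rightarrow> nat) \<Rightarrow> bool" where
  "simple_temporal_clique V lam \<longleftrightarrow> finite V \<and>
     (\<forall>x\<in>V. \<forall>y\<in>V. \<forall>z\<in>V. x \<noteq> y \<and> x \<noteq> z \<and> y \<noteq> z \<longrightarrow> lam {x,y} \<noteq> lam {x,z})"

definition journey :: "'v set \<Rightarrow> ('v set \<Rightarrow> nat) \<Rightarrow> 'v list \<Rightarrow> 'v \<Rightarrow> 'v \<Rightarrow> bool" where
  "journey V lam p x y \<longleftrightarrow> length p \<ge> 2 \<and> set p \<subseteq> V \<and> hd p = x \<and> last p = y \<and>
     (\<forall>i. Suc i < length p \<longrightarrow> p ! i \<noteq> p ! Suc i) \<and>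
     (\<forall>i. Suc (Suc i) < length p \<longrightarrow>
        lam {p ! i, p ! Suc i} < lam {p ! Suc i, p ! Suc (Suc i)})"

definition first_edge :: "'v list \<Rightarrow> 'v set" where
  "first_edge p = {p ! 0, p ! 1}"

definition last_edge :: "'v list \<Rightarrow> 'v set" where
  "last_edge p = {p ! (length p - 2), p ! (length p - 1)}"

definition e_minus :: "'v set \<Rightarrow> ('v set \<Rightarrow> nat) \<Rightarrow> 'v \<Rightarrow> 'v set" where
  "e_minus V lam v = {v, ARG_MIN (\<lambda>w. lam {v,w}) w. w \<in> V \<and> w \<noteq> v}"

definition e_plus :: "'v set \<Rightarrow> ('v set \<Rightarrow> nat) \<Rightarrow> 'v \<Rightarrow> 'v set" where
  "e_plus V lam v = {v, ARG_MAX (\<lambda>w. lam {v,w}) w. w \<in> V \<and> w \<noteq> v}"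

end

theory Submission
  imports Defs
begin

lemma emin_aux:
  assumes "u \<in> V" "u \<noteq> v" "{u,v} = e_minus V lam v" "x \<in> V" "x \<noteq> v"
  shows "lam {v,u} \<le> lam {v,x}"
proof -
  define m where "m = (ARG_MIN (\<lambda>w. lam {v,w}) w. w \<in> V \<and> w \<noteq> v)"
  have h: "(m \<in> V \<and> m \<noteq> v) \<and> (\<forall>y. y \<in> V \<and> y \<noteq> v \<longrightarrow> lam {v,m} \<le> lam {v,y})"
    unfolding m_def using arg_min_nat_lemma[of "\<lambda>w. w \<in> V \<and> w \<noteq> v" u "\<lambda>w. lam {v,w}"] assms by blast
  have "{u,v} = {v,m}" using assms(3) unfolding e_minus_def m_def by simp
  then have "m = u" using h assms(2) by (auto simp: doubleton_eq_iff)
  then show ?thesis using h assms by blast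
qed

lemma emax_aux:
  assumes "finite V" "u \<in> V" "u \<noteq> w" "{u,w} = e_plus V lam w" "x \<in> V" "x \<noteq> w"
  shows "lam {w,x} \<le> lam {w,u}"
proof -
  define m where "m = (ARG_MAX (\<lambda>y. lam {w,y}) y. y \<in> V \<and> y \<noteq> w)"
  have b: "\<forall>y. y \<in> V \<and> y \<noteq> w \<longrightarrow> lam {w,y} < Suc (Max ((\<lambda>y. lam {w,y}) ` V))"
    using assms(1) by (simp add: le_imp_less_Suc)
  have h: "(m \<in> V \<and> m \<noteq> w) \<and> (\<forall>y. y \<in> V \<and> y \<noteq> w \<longrightarrow> lam {w,y} \<le> lam {w,m})"
    unfolding m_def using arg_max_nat_lemma[OF _ b, of u] assms by blast
  have "{u,w} = {w,m}" using assms(4) unfolding e_plus_def m_def by simp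
  then have "m = u" using h assms(3) by (auto simp: doubleton_eq_iff)
  then show ?thesis using h assms by blast
qed

lemma journey3:
  assumes "a \<in> V" "b \<in> V" "c \<in> V" "a \<noteq> b" "b \<noteq> c" "lam {a,b} < lam {b,c}"
  shows "journey V lam [a,b,c] a c"
proof -
  have 1: "\<forall>i. Suc i < length [a,b,c] \<longrightarrow> [a,b,c] ! i \<noteq> [a,b,c] ! Suc i"
  proof (intro allI impI)
    fix i assume "Suc i < length [a,b,c]"
    then have "i = 0 \<or> i = 1" by auto
    then show "[a,b,c] ! i \<noteq> [a,b,c] ! Suc i" using assms by auto
  qed
  have 2: "\<forall>i. Suc (Suc i) < length [a,b,c] \<longrightarrow>
        lam {[a,b,c] ! i, [a,b,c] ! Suc i} < lam {[a,b,c] ! Suc i, [a,b,c] ! Suc (Suc i)}"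
  proof (intro allI impI)
    fix i assume "Suc (Suc i) < length [a,b,c]"
    then have "i = 0" by auto
    then show "lam {[a,b,c] ! i, [a,b,c] ! Suc i} < lam {[a,b,c] ! Suc i, [a,b,c] ! Suc (Suc i)}"
      using assms by simp
  qed
  show ?thesis unfolding journey_def using 1 2 assms by simp
qed

theorem lemma1:
  fixes V :: "'v set" and lam :: "'v set \<Rightarrow> nat"
  assumes "simple_temporal_clique V lam"
  shows "(\<forall>u\<in>V. \<forall>v\<in>V. u \<noteq> v \<and> {u,v} = e_minus V lam v \<longrightarrow>
            (\<forall>x\<in>V. x \<notin> {u,v} \<longrightarrow>
               (\<exists>p. journey V lam p u x \<and> first_edge p = {u,v})))
       \<and> (\<forall>u\<in>V. \<forall>w\<in>V. u \<noteq> w \<and> {u,w} = e_plus V lam w \<longrightarrow>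
            (\<forall>x\<in>V. x \<notin> {u,w} \<longrightarrow>
               (\<exists>p. journey V lam p x u \<and> last_edge p = {w,u})))"
proof -
  have cl: "\<And>a b c. a \<in> V \<Longrightarrow> b \<in> V \<Longrightarrow> c \<in> V \<Longrightarrow> a \<noteq> b \<Longrightarrow> a \<noteq> c \<Longrightarrow> b \<noteq> c \<Longrightarrow> lam {a,b} \<noteq> lam {a,c}"
    using assms unfolding simple_temporal_clique_def by blast
  show ?thesis
proof (intro conjI ballI impI)
  fix u v x assume uv: "u \<in> V" "v \<in> V" "u \<noteq> v \<and> {u,v} = e_minus V lam v" and x: "x \<in> V" "x \<notin> {u,v}"
  have le: "lam {v,u} \<le> lam {v,x}" using emin_aux[of u V v lam x] uv x by auto
  have ne: "lam {v,u} \<noteq> lam {v,x}" using cl[of v u x] uv x by auto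
  have lt: "lam {u,v} < lam {v,x}" using le ne by (simp add: insert_commute)
  show "\<exists>p. journey V lam p u x \<and> first_edge p = {u,v}"
  proof (intro exI conjI)
    show "journey V lam [u,v,x] u x" using journey3[of u V v x lam] uv x lt by auto
    show "first_edge [u,v,x] = {u,v}" by (simp add: first_edge_def)
  qed
next
  fix u w x assume uw: "u \<in> V" "w \<in> V" "u \<noteq> w \<and> {u,w} = e_plus V lam w" and x: "x \<in> V" "x \<notin> {u,w}"
  have fin: "finite V" using assms unfolding simple_temporal_clique_def by auto
  have le: "lam {w,x} \<le> lam {w,u}" using emax_aux[OF fin, of u w lam x] uw x by auto
  have ne: "lam {w,u} \<noteq> lam {w,x}" using cl[of w u x] uw x by auto
  have lt: "lam {x,w} < lam {w,u}" using le ne by (simp add: insert_commute)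
  show "\<exists>p. journey V lam p x u \<and> last_edge p = {w,u}"
  proof (intro exI conjI)
    show "journey V lam [x,w,u] x u" using journey3[of x V w u lam] uw x lt by auto
    show "last_edge [x,w,u] = {w,u}" by (simp add: last_edge_def)
  qed
qed
qed

end
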